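(* Let $A=\{a_0,a_1,\dots,a_{k-1}\}\subseteq\mathcal{C}_n$ with $a_0<\dots<a_{k-1}$ and let $m\in\{0,\dots,k-1\}$. Then the set $\mathcal{DN}^{\,1}_m=\{\overline{a_m}\}\cup\mathcal{L}^{n-1}_{a_m}\left(\sigma^{(n)}_k(A)\right)$ is a subsemiring of the simplex $\sigma^{(n)}_k(A)$.
   Context: $\mathcal{C}_n=\{0,1,\dots,n-1\}$ with its usual order; $\widehat{\mathcal{E}}_{\mathcal{C}_n}$ is the set of all order-preserving maps $\mathcal{C}_n\to\mathcal{C}_n$ (not required to fix $0$), a semiring with $(\alpha+\beta)(x)=\max(\alpha(x),\beta(x))$ and $(\alpha\cdot\beta)(x)=\beta(\alpha(x))$. The simplex $\sigma^{(n)}_k(A)$ is the set of all $\alpha\in\widehat{\mathcal{E}}_{\mathcal{C}_n}$ with $\mathrm{im}(\alpha)\subseteq A$ (a subsemiring). $\overline{x}$ is the constant map with value $x$. For $s\in\{0,\dots,n-1\}$, the layer $\mathcal{L}^{s}_{a_m}\left(\sigma^{(n)}_k(A)\right)$ is the set of $\alpha\in\sigma^{(n)}_k(A)$ with exactly $s$ elements $i\in\mathcal{C}_n$ satisfying $\alpha(i)=a_m$. A subsemiring is a nonempty subset closed under $+$ and $\cdot$. *)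

theory Defs
  imports Main
begin

text \<open>Order-preserving maps C_n -> C_n, C_n = {0..<n}, represented as functions
  nat => nat that are 0 outside {0..<n} (canonical representatives).\<close>

definition endo :: "nat \<Rightarrow> (nat \<Rightarrow> nat) set" where
  "endo n = {f. (\<forall>x<n. f x < n) \<and> (\<forall>x y. x \<le> y \<and> y < n \<longrightarrow> f x \<le> f y)
               \<and> (\<forall>x. n \<le> x \<longrightarrow> f x = 0)}"

definition splus :: "nat \<Rightarrow> (nat \<Rightarrow> nat) \<Rightarrow> (nat \<Rightarrow> nat) \<Rightarrow> (nat \<Rightarrow> nat)" where
  "splus n \<alpha> \<beta> = (\<lambda>x. if x < n then max (\<alpha> x) (\<beta> x) else 0)"

definition stimes :: "nat \<Rightarrow> (nat \<Rightarrow> nat) \<Rightarrow> (nat \<Rightarrow> nat) \<Rightarrow> (nat \<Rightarrow> nat)" where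
  "stimes n \<alpha> \<beta> = (\<lambda>x. if x < n then \<beta> (\<alpha> x) else 0)"

definition const_map :: "nat \<Rightarrow> nat \<Rightarrow> (nat \<Rightarrow> nat)" where
  "const_map n a = (\<lambda>x. if x < n then a else 0)"

definition simplex :: "nat \<Rightarrow> nat set \<Rightarrow> (nat \<Rightarrow> nat) set" where
  "simplex n A = {\<alpha> \<in> endo n. (\<lambda>x. \<alpha> x) ` {0..<n} \<subseteq> A}"

definition layer :: "nat \<Rightarrow> nat \<Rightarrow> nat \<Rightarrow> nat set \<Rightarrow> (nat \<Rightarrow> nat) set" where
  "layer n s a A = {\<alpha> \<in> simplex n A. card {i. i < n \<and> \<alpha> i = a} = s}"

definition subsemiring :: "nat \<Rightarrow> (nat \<Rightarrow> nat) set \<Rightarrow> (nat \<Rightarrow> nat) set \<Rightarrow> bool" where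
  "subsemiring n S T \<longleftrightarrow> S \<subseteq> T \<and> S \<noteq> {} \<and>
     (\<forall>\<alpha>\<in>S. \<forall>\<beta>\<in>S. splus n \<alpha> \<beta> \<in> S \<and> stimes n \<alpha> \<beta> \<in> S)"

end

theory Submission
  imports Defs
begin

definition devP :: "nat \<Rightarrow> nat \<Rightarrow> (nat \<Rightarrow> nat) \<Rightarrow> bool" where
  "devP n c \<alpha> \<longleftrightarrow> (\<forall>i<n. i \<noteq> 0 \<longrightarrow> \<alpha> i = c) \<or> (\<forall>i<n. i \<noteq> n - 1 \<longrightarrow> \<alpha> i = c)"

lemma const_in_simplex:
  assumes "c \<in> A" "c < n" shows "const_map n c \<in> simplex n A"
  using assms by (auto simp: simplex_def endo_def const_map_def)

lemma charS:
  assumes "c < n" "c \<in> A" "\<alpha> \<in> simplex n A"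
  shows "(\<alpha> = const_map n c \<or> card {i. i < n \<and> \<alpha> i = c} = n - 1) \<longleftrightarrow> devP n c \<alpha>"
proof
  have mono: "\<And>x y. x \<le> y \<Longrightarrow> y < n \<Longrightarrow> \<alpha> x \<le> \<alpha> y"
   and z: "\<And>x. n \<le> x \<Longrightarrow> \<alpha> x = 0"
    using assms(3) by (auto simp: simplex_def endo_def)
  assume "\<alpha> = const_map n c \<or> card {i. i < n \<and> \<alpha> i = c} = n - 1"
  then show "devP n c \<alpha>"
  proof
    assume "\<alpha> = const_map n c" then show ?thesis by (auto simp: devP_def const_map_def)
  next
    assume h: "card {i. i < n \<and> \<alpha> i = c} = n - 1"
    let ?E = "{i. i < n \<and> \<alpha> i = c}" and ?D = "{i. i < n \<and> \<alpha> i \<noteq> c}"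
    have "?E \<union> ?D = {0..<n}" by auto
    moreover have "?E \<inter> ?D = {}" by auto
    ultimately have "card ?E + card ?D = n"
      by (metis card_Un_disjoint card_atLeastLessThan diff_zero finite_Un finite_atLeastLessThan)
    with h assms(1) have "card ?D = 1" by simp
    then obtain j where D: "?D = {j}" by (auto simp: card_Suc_eq)
    have jn: "j < n" "\<alpha> j \<noteq> c" using D by auto
    have oth: "\<And>i. i < n \<Longrightarrow> i \<noteq> j \<Longrightarrow> \<alpha> i = c" using D by blast
    show ?thesis
    proof (cases "j = 0 \<or> j = n - 1")
      case True then show ?thesis using oth by (auto simp: devP_def)
    next
      case False
      have "\<alpha> 0 = c" "\<alpha> (n - 1) = c" using oth False assms(1) by auto
      moreover have "\<alpha> 0 \<le> \<alpha> j" "\<alpha> j \<le> \<alpha> (n - 1)" using mono jn by auto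
      ultimately show ?thesis using jn by simp
    qed
  qed
next
  have z: "\<And>x. n \<le> x \<Longrightarrow> \<alpha> x = 0"
    using assms(3) by (auto simp: simplex_def endo_def)
  assume P: "devP n c \<alpha>"
  then obtain j where j: "\<And>i. i < n \<Longrightarrow> i \<noteq> j \<Longrightarrow> \<alpha> i = c"
    unfolding devP_def by blast
  let ?E = "{i. i < n \<and> \<alpha> i = c}"
  have sub: "{0..<n} - {j} \<subseteq> ?E" using j by auto
  have "card ({0..<n} - {j}) \<ge> n - 1" by (simp add: card_Diff_singleton_if)
  hence ge: "card ?E \<ge> n - 1"
    using card_mono[OF _ sub] by simp
  have le: "card ?E \<le> n" using card_mono[of "{0..<n}" ?E] by fastforce
  show "\<alpha> = const_map n c \<or> card ?E = n - 1"
  proof (cases "card ?E = n")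
    case True
    have "?E = {0..<n}" using True by (intro card_subset_eq) auto
    hence "\<alpha> = const_map n c" using z by (auto simp: const_map_def fun_eq_iff)
    then show ?thesis ..
  next
    case False then have "card ?E = n - 1" using ge le assms(1) by linarith
    then show ?thesis by simp
  qed
qed

theorem proposition2:
  fixes n k m :: nat and A :: "nat set"
  assumes "A \<subseteq> {0..<n}" and "card A = k" and "m < k"
  defines "a \<equiv> sorted_list_of_set A"
  shows "subsemiring n ({const_map n (a ! m)} \<union> layer n (n - 1) (a ! m) A) (simplex n A)"
proof -
  define c where "c = a ! m"
  have fin: "finite A" using assms(1) finite_subset by blast
  have cA: "c \<in> A" using assms fin unfolding c_def a_def
    by (metis length_sorted_list_of_set nth_mem set_sorted_list_of_set)
  have cn: "c < n" using cA assms(1) by auto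
  have cs: "const_map n c \<in> simplex n A" using const_in_simplex cA cn .
  have S: "{const_map n c} \<union> layer n (n - 1) c A = {\<alpha> \<in> simplex n A. devP n c \<alpha>}"
    using charS[OF cn cA] cs by (auto simp: layer_def)
  have bc: "\<beta> c = c" if "\<beta> \<in> simplex n A" "devP n c \<beta>" for \<beta>
  proof -
    have mono: "\<And>x y. x \<le> y \<Longrightarrow> y < n \<Longrightarrow> \<beta> x \<le> \<beta> y"
     and v: "\<And>x. x < n \<Longrightarrow> \<beta> x \<in> A" "\<And>x. x < n \<Longrightarrow> \<beta> x < n"
      using that(1) by (auto simp: simplex_def endo_def)
    show ?thesis
    proof (cases "n = 1")
      case True then show ?thesis using v(1)[of 0] cn assms(1) by auto
    next
      case False
      show ?thesis using that(2) unfolding devP_def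
      proof
        assume h: "\<forall>i<n. i \<noteq> 0 \<longrightarrow> \<beta> i = c"
        show ?thesis
        proof (cases "c = 0")
          case True
          have "\<beta> 0 \<le> \<beta> 1" using mono[of 0 1] False cn by auto
          then show ?thesis using h True False cn by auto
        qed (use h cn in auto)
      next
        assume h: "\<forall>i<n. i \<noteq> n - 1 \<longrightarrow> \<beta> i = c"
        show ?thesis
        proof (cases "c = n - 1")
          case True
          have "\<beta> 0 \<le> \<beta> (n-1)" using mono[of 0 "n-1"] cn by auto
          then show ?thesis using h True False cn v(2)[of "n-1"] by auto
        qed (use h cn in auto)
      qed
    qed
  qed
  show ?thesis
    unfolding c_def[symmetric] S subsemiring_def
  proof (intro conjI ballI)
    show "{\<alpha> \<in> simplex n A. devP n c \<alpha>} \<subseteq> simplex n A" by auto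
    show "{\<alpha> \<in> simplex n A. devP n c \<alpha>} \<noteq> {}"
      using cs by (auto simp: devP_def const_map_def)
  next
    fix \<alpha> \<beta> assume a: "\<alpha> \<in> {\<alpha> \<in> simplex n A. devP n c \<alpha>}"
      and b: "\<beta> \<in> {\<alpha> \<in> simplex n A. devP n c \<alpha>}"
    have am: "\<And>x y. x \<le> y \<Longrightarrow> y < n \<Longrightarrow> \<alpha> x \<le> \<alpha> y"
     and av: "\<And>x. x < n \<Longrightarrow> \<alpha> x \<in> A" "\<And>x. x < n \<Longrightarrow> \<alpha> x < n"
      using a by (auto simp: simplex_def endo_def)
    have bm: "\<And>x y. x \<le> y \<Longrightarrow> y < n \<Longrightarrow> \<beta> x \<le> \<beta> y"
     and bv: "\<And>x. x < n \<Longrightarrow> \<beta> x \<in> A" "\<And>x. x < n \<Longrightarrow> \<beta> x < n"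
      using b by (auto simp: simplex_def endo_def)
    have ap: "devP n c \<alpha>" and bp: "devP n c \<beta>" using a b by auto
    have mx: "max (\<alpha> x) (\<beta> x) \<le> max (\<alpha> y) (\<beta> y)" if "x \<le> y" "y < n" for x y
      using am[OF that] bm[OF that] by (simp add: max.coboundedI1 max.coboundedI2)
    have "splus n \<alpha> \<beta> \<in> simplex n A"
      unfolding simplex_def endo_def splus_def
    proof (intro CollectI conjI allI impI subsetI)
      fix x assume "x < n" thus "(if x < n then max (\<alpha> x) (\<beta> x) else 0) < n"
        using av bv by simp
    next
      fix x y assume "x \<le> y \<and> y < n"
      thus "(if x < n then max (\<alpha> x) (\<beta> x) else 0) \<le> (if y < n then max (\<alpha> y) (\<beta> y) else 0)"
        using mx by simp
    next
      fix x :: nat assume "n \<le> x" thus "(if x < n then max (\<alpha> x) (\<beta> x) else 0) = 0" by simp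
    next
      fix z assume "z \<in> (\<lambda>x. if x < n then max (\<alpha> x) (\<beta> x) else 0) ` {0..<n}"
      then obtain x where "x < n" "z = max (\<alpha> x) (\<beta> x)" by auto
      thus "z \<in> A" using av bv by (simp add: max_def)
    qed
    moreover have "devP n c (splus n \<alpha> \<beta>)"
    proof -
      have gen: "\<gamma> 0 \<le> c \<and> c \<le> \<gamma> (n-1)" if "n > 1" "devP n c \<gamma>"
        "\<And>x y. x \<le> y \<Longrightarrow> y < n \<Longrightarrow> \<gamma> x \<le> \<gamma> y" for \<gamma>
        using that(2) unfolding devP_def
      proof
        assume h: "\<forall>i<n. i \<noteq> 0 \<longrightarrow> \<gamma> i = c"
        have "\<gamma> 1 = c" "\<gamma> (n-1) = c" using h that(1) by auto
        moreover have "\<gamma> 0 \<le> \<gamma> 1" using that(3)[of 0 1] that(1) by simp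
        ultimately show ?thesis by simp
      next
        assume h: "\<forall>i<n. i \<noteq> n - 1 \<longrightarrow> \<gamma> i = c"
        have "\<gamma> 0 = c" using h that(1) by auto
        moreover have "\<gamma> 0 \<le> \<gamma> (n-1)" using that(3)[of 0 "n-1"] that(1) by simp
        ultimately show ?thesis by simp
      qed
      have a0: "n > 1 \<Longrightarrow> \<alpha> 0 \<le> c" "n > 1 \<Longrightarrow> \<beta> 0 \<le> c"
        using gen[OF _ ap am] gen[OF _ bp bm] by auto
      have a1: "n > 1 \<Longrightarrow> \<alpha> (n-1) \<ge> c" "n > 1 \<Longrightarrow> \<beta> (n-1) \<ge> c"
        using gen[OF _ ap am] gen[OF _ bp bm] by auto
      show ?thesis
      proof (cases "n > 1")
        case False then show ?thesis by (auto simp: devP_def)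
      next
        case True
        show ?thesis using ap bp a0[OF True] a1[OF True] True
          unfolding devP_def splus_def by (auto simp: max_def)
      qed
    qed
    ultimately show "splus n \<alpha> \<beta> \<in> {\<alpha> \<in> simplex n A. devP n c \<alpha>}" by simp
    have "stimes n \<alpha> \<beta> \<in> simplex n A"
      using am av bm bv by (auto simp: simplex_def endo_def stimes_def)
    moreover have "devP n c (stimes n \<alpha> \<beta>)"
      using ap bc[OF _ bp] b unfolding devP_def stimes_def by auto
    ultimately show "stimes n \<alpha> \<beta> \<in> {\<alpha> \<in> simplex n A. devP n c \<alpha>}" by simp
  qed
qed

end
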